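(* Let $z\colon\mathbf c^\circ\to\mathbf c^\bullet=\mu_k\mathbf c^\circ$ be a forward mutation at a vertex $k$ in $\mathrm{CEG}(\mathcal Q)$, and identify the vertex sets of $Q_{\mathbf c^\circ}$ and $Q_{\mathbf c^\bullet}$ (the vertex $k$ corresponding to the mutated object) as a common set $Q_0$. Let $t^\circ_l$ and $t^\bullet_l$ ($l\in Q_0$) be the local twists at $\mathbf c^\circ$ and $\mathbf c^\bullet$ respectively, and let $\mathrm{conj}_z\colon\pi_1(\mathrm{ceg}(\mathcal Q),\mathbf c^\circ)\to\pi_1(\mathrm{ceg}(\mathcal Q),\mathbf c^\bullet)$, $t\mapsto z^{-1}tz$. Then for every $l\in Q_0$, $$\mathrm{conj}_z(t^\circ_l)=\begin{cases}(t^\bullet_k)^{-1}\,t^\bullet_l\,t^\bullet_k & \text{if there are arrows from } l \text{ to } k \text{ in } Q_{\mathbf c^\circ},\\ t^\bullet_l&\text{otherwise.}\end{cases}$$ Consequently $\mathrm{conj}_z$ restricts to an isomorphism $\mathrm{CBr}(\mathbf c^\circ)\cong\mathrm{CBr}(\mathbf c^\bullet)$.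
   Context: Let $(Q,W)$ be a non-degenerate quiver with potential: $Q$ has no loops or oriented 2-cycles and every quiver with potential obtained from it by iterated Derksen–Weyman–Zelevinsky mutation again has none. Let $\Gamma=\Gamma(Q,W)$ be its Ginzburg dg algebra (degree 3, Jacobi-finite) and $\mathcal C(\Gamma)=\operatorname{per}\Gamma/D_{fd}(\Gamma)$ its cluster category. A cluster is a cluster tilting set in $\mathcal C(\Gamma)$; $Q_{\mathbf c}$ is the Gabriel quiver of $\operatorname{End}(\bigoplus_{M\in\mathbf c}M)$, with vertices the objects of $\mathbf c$; mutation of clusters induces quiver mutation. $\mathbf c_\Gamma$ is the canonical cluster, $\mathcal Q$ the mutation class of $(Q,W)$. $\underline{\mathrm{CEG}}(\mathcal Q)$: vertices the clusters reachable from $\mathbf c_\Gamma$ by mutation, edges mutations; $\mathrm{CEG}(\mathcal Q)$ replaces each edge $\mathbf c-\mu_i\mathbf c$ by oriented edges $\mathbf c\to\mu_i\mathbf c$ and $\mu_i\mathbf c\to\mathbf c$ (forward mutations). Paths compose left to right. The local twist $t_i$ at $\mathbf c$ is the loop $\mathbf c\to\mu_i\mathbf c\to\mathbf c$ of the two forward mutations of the edge $\mu_i$. The cluster exchange groupoid $\mathrm{ceg}(\mathcal Q)$ is the quotient of the path groupoid of $\mathrm{CEG}(\mathcal Q)$ by the following relations, imposed for every cluster $\mathbf c$ and ordered pair of distinct vertices $i,j$ of $Q_{\mathbf c}$ with no arrow from $i$ to $j$. Put $\mathbf c'=\mu_j\mathbf c$; in the path $\mu_i\mathbf c-\mathbf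 c-\mathbf c'-\mu_i\mathbf c'$ write $x$ for forward mutations in the direction $\mu_i\mathbf c\to\mathbf c\to\mathbf c'\to\mu_i\mathbf c'$ and $y$ for those in the opposite direction. (1) $x^2y=yx^2$ (morphisms $\mathbf c\to\mathbf c'$). (2) If also no arrow from $j$ to $i$, the clusters $\mathbf c,\mu_j\mathbf c,\mu_i\mu_j\mathbf c=\mu_j\mu_i\mathbf c,\mu_i\mathbf c$ form a 4-cycle; with $x$ labelling forward mutations around it in the direction starting $\mathbf c\to\mu_j\mathbf c$ and $y$ the other direction, impose $x^2=y^2$. (3) If exactly one arrow from $j$ to $i$, alternately mutating at $i,j$ gives a 5-cycle; with analogous labelling impose $x^2=y^3$. The cluster braid group $\mathrm{CBr}(\mathbf c)$ is the subgroup of $\pi_1(\mathrm{ceg}(\mathcal Q),\mathbf c)$ generated by the local twists $t_i$, $i$ a vertex of $Q_{\mathbf c}$. *)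

theory Defs
  imports "HOL-Algebra.Group" "HOL-Algebra.Generated_Groups"
begin

(* Abstract combinatorial model of the cluster exchange data of a non-degenerate
   quiver with potential.  Objects of the cluster category have type 'o; a cluster
   is a (finite) set of objects.
   mut c X  : the object replacing X when mutating the cluster c at X
   arr c X Y: number of arrows from X to Y in the Gabriel quiver Q_c
   cG       : the canonical cluster. *)

definition mu :: "('o set \<Rightarrow> 'o \<Rightarrow> 'o) \<Rightarrow> 'o set \<Rightarrow> 'o \<Rightarrow> 'o set" where
  "mu mut c X = insert (mut c X) (c - {X})"

(* clusters reachable from the canonical cluster: vertices of CEG *)
inductive_set reach :: "('o set \<Rightarrow> 'o \<Rightarrow> 'o) \<Rightarrow> 'o set \<Rightarrow> 'o set set"
  for mut cG where
  base: "cG \<in> reach mut cG"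
| step: "c \<in> reach mut cG \<Longrightarrow> X \<in> c \<Longrightarrow> mu mut c X \<in> reach mut cG"

definition bmat :: "('o set \<Rightarrow> 'o \<Rightarrow> 'o \<Rightarrow> nat) \<Rightarrow> 'o set \<Rightarrow> 'o \<Rightarrow> 'o \<Rightarrow> int" where
  "bmat arr c X Y = int (arr c X Y) - int (arr c Y X)"

(* Standing facts about clusters in C(Gamma) for non-degenerate (Q,W), stated for the
   reachable clusters: mutation replaces one object by a new one, is involutive,
   quivers have no loops / 2-cycles, mutation of clusters induces (Fomin-Zelevinsky)
   quiver mutation, and the squares / pentagons described in the definition of ceg close. *)
definition cluster_data ::
  "('o set \<Rightarrow> 'o \<Rightarrow> 'o) \<Rightarrow> ('o set \<Rightarrow> 'o \<Rightarrow> 'o \<Rightarrow> nat) \<Rightarrow> 'o set \<Rightarrow> bool" where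
  "cluster_data mut arr cG \<longleftrightarrow> finite cG \<and>
    (\<forall>c \<in> reach mut cG. \<forall>X \<in> c.
        mut c X \<notin> c \<and> mut (mu mut c X) (mut c X) = X) \<and>
    (\<forall>c \<in> reach mut cG. \<forall>X \<in> c. \<forall>Y \<in> c.
        arr c X X = 0 \<and> (arr c X Y = 0 \<or> arr c Y X = 0)) \<and>
    (\<forall>c \<in> reach mut cG. \<forall>k \<in> c. \<forall>Y \<in> c - {k}.
        arr (mu mut c k) (mut c k) Y = arr c Y k \<and>
        arr (mu mut c k) Y (mut c k) = arr c k Y \<and>
        (\<forall>Z \<in> c - {k}. int (arr (mu mut c k) Y Z) =
           max 0 (bmat arr c Y Z + max 0 (bmat arr c Y k) * max 0 (bmat arr c k Z)
                  - max 0 (bmat arr c k Y) * max 0 (bmat arr c Z k)))) \<and>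
    (\<forall>c \<in> reach mut cG. \<forall>i \<in> c. \<forall>j \<in> c. i \<noteq> j \<and> arr c i j = 0 \<and> arr c j i = 0 \<longrightarrow>
        mu mut (mu mut c j) i = mu mut (mu mut c i) j) \<and>
    (\<forall>c \<in> reach mut cG. \<forall>i \<in> c. \<forall>j \<in> c. i \<noteq> j \<and> arr c i j = 0 \<and> arr c j i = 1 \<longrightarrow>
        mu mut (mu mut (mu mut c i) j) (mut c i) = mu mut (mu mut c j) i)"

(* A forward mutation (oriented edge of CEG) is a pair (c, X): c -> mu c X.
   A letter of a word in the path groupoid is a forward mutation together with
   True (traversed forwards) or False (formal inverse). Paths compose left to right. *)
type_synonym 'o fmut = "'o set \<times> 'o"
type_synonym 'o letter = "'o fmut \<times> bool"

fun lsrc :: "('o set \<Rightarrow> 'o \<Rightarrow> 'o) \<Rightarrow> 'o letter \<Rightarrow> 'o set" where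
  "lsrc mut ((c, X), b) = (if b then c else mu mut c X)"

fun ltgt :: "('o set \<Rightarrow> 'o \<Rightarrow> 'o) \<Rightarrow> 'o letter \<Rightarrow> 'o set" where
  "ltgt mut ((c, X), b) = (if b then mu mut c X else c)"

definition fmuts :: "('o set \<Rightarrow> 'o \<Rightarrow> 'o) \<Rightarrow> 'o set \<Rightarrow> 'o fmut set" where
  "fmuts mut cG = {(c, X). c \<in> reach mut cG \<and> X \<in> c}"

fun walk :: "('o set \<Rightarrow> 'o \<Rightarrow> 'o) \<Rightarrow> 'o set \<Rightarrow> 'o set \<Rightarrow> 'o letter list \<Rightarrow> 'o set \<Rightarrow> bool" where
  "walk mut cG a [] b = (a = b)"
| "walk mut cG a (l # w) b =
     (fst l \<in> fmuts mut cG \<and> lsrc mut l = a \<and> walk mut cG (ltgt mut l) w b)"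

definition fw :: "'o fmut list \<Rightarrow> 'o letter list" where
  "fw es = map (\<lambda>e. (e, True)) es"

fun flip :: "'o letter \<Rightarrow> 'o letter" where
  "flip (e, b) = (e, \<not> b)"

definition inv_word :: "'o letter list \<Rightarrow> 'o letter list" where
  "inv_word w = rev (map flip w)"

(* the defining relations (1),(2),(3) of ceg *)
definition ceg_rels ::
  "('o set \<Rightarrow> 'o \<Rightarrow> 'o) \<Rightarrow> ('o set \<Rightarrow> 'o \<Rightarrow> 'o \<Rightarrow> nat) \<Rightarrow> 'o set
     \<Rightarrow> ('o letter list \<times> 'o letter list) set" where
  "ceg_rels mut arr cG =
     {(fw [(c, i), (mu mut c i, mut c i), (c, j)],
       fw [(c, j), (mu mut c j, i), (mu mut (mu mut c j) i, mut (mu mut c j) i)]) | c i j.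
        c \<in> reach mut cG \<and> i \<in> c \<and> j \<in> c \<and> i \<noteq> j \<and> arr c i j = 0}
   \<union> {(fw [(c, j), (mu mut c j, i)], fw [(c, i), (mu mut c i, j)]) | c i j.
        c \<in> reach mut cG \<and> i \<in> c \<and> j \<in> c \<and> i \<noteq> j \<and> arr c i j = 0 \<and> arr c j i = 0}
   \<union> {(fw [(c, j), (mu mut c j, i)],
        fw [(c, i), (mu mut c i, j), (mu mut (mu mut c i) j, mut c i)]) | c i j.
        c \<in> reach mut cG \<and> i \<in> c \<and> j \<in> c \<and> i \<noteq> j \<and> arr c i j = 0 \<and> arr c j i = 1}"

inductive ceg_eq ::
  "('o set \<Rightarrow> 'o \<Rightarrow> 'o) \<Rightarrow> ('o set \<Rightarrow> 'o \<Rightarrow> 'o \<Rightarrow> nat) \<Rightarrow> 'o set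
     \<Rightarrow> 'o letter list \<Rightarrow> 'o letter list \<Rightarrow> bool"
  for mut arr cG where
  refl: "ceg_eq mut arr cG w w"
| sym: "ceg_eq mut arr cG u v \<Longrightarrow> ceg_eq mut arr cG v u"
| trans: "ceg_eq mut arr cG u v \<Longrightarrow> ceg_eq mut arr cG v w \<Longrightarrow> ceg_eq mut arr cG u w"
| cancel: "ceg_eq mut arr cG (u @ [l, flip l] @ v) (u @ v)"
| rel: "(p, q) \<in> ceg_rels mut arr cG \<Longrightarrow> ceg_eq mut arr cG (u @ p @ v) (u @ q @ v)"

definition ceg_class ::
  "('o set \<Rightarrow> 'o \<Rightarrow> 'o) \<Rightarrow> ('o set \<Rightarrow> 'o \<Rightarrow> 'o \<Rightarrow> nat) \<Rightarrow> 'o set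
     \<Rightarrow> 'o letter list \<Rightarrow> 'o letter list set" where
  "ceg_class mut arr cG w = {v. ceg_eq mut arr cG w v}"

definition pi1 ::
  "('o set \<Rightarrow> 'o \<Rightarrow> 'o) \<Rightarrow> ('o set \<Rightarrow> 'o \<Rightarrow> 'o \<Rightarrow> nat) \<Rightarrow> 'o set \<Rightarrow> 'o set
     \<Rightarrow> 'o letter list set monoid" where
  "pi1 mut arr cG c =
     \<lparr> carrier = {ceg_class mut arr cG w | w. walk mut cG c w c},
       mult = (\<lambda>A B. ceg_class mut arr cG ((SOME u. u \<in> A) @ (SOME v. v \<in> B))),
       one = ceg_class mut arr cG [] \<rparr>"

definition twist :: "('o set \<Rightarrow> 'o \<Rightarrow> 'o) \<Rightarrow> 'o set \<Rightarrow> 'o \<Rightarrow> 'o letter list" where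
  "twist mut c X = fw [(c, X), (mu mut c X, mut c X)]"

definition CBr ::
  "('o set \<Rightarrow> 'o \<Rightarrow> 'o) \<Rightarrow> ('o set \<Rightarrow> 'o \<Rightarrow> 'o \<Rightarrow> nat) \<Rightarrow> 'o set \<Rightarrow> 'o set
     \<Rightarrow> 'o letter list set set" where
  "CBr mut arr cG c =
     generate (pi1 mut arr cG c) {ceg_class mut arr cG (twist mut c X) | X. X \<in> c}"

definition conjz ::
  "('o set \<Rightarrow> 'o \<Rightarrow> 'o) \<Rightarrow> ('o set \<Rightarrow> 'o \<Rightarrow> 'o \<Rightarrow> nat) \<Rightarrow> 'o set \<Rightarrow> 'o fmut
     \<Rightarrow> 'o letter list set \<Rightarrow> 'o letter list set" where
  "conjz mut arr cG z A = ceg_class mut arr cG ([(z, False)] @ (SOME w. w \<in> A) @ [(z, True)])"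

end

theory Submission
  imports Defs
begin

lemma ceg_eq_ctx:
  "ceg_eq mut arr cG x y \<Longrightarrow> ceg_eq mut arr cG (a @ x @ b) (a @ y @ b)"
proof (induction rule: ceg_eq.induct)
  case (refl w) then show ?case by (rule ceg_eq.refl)
next
  case (sym u v) then show ?case by (blast intro: ceg_eq.sym)
next
  case (trans u v w) then show ?case by (blast intro: ceg_eq.trans)
next
  case (cancel u l v) then show ?case using ceg_eq.cancel[of mut arr cG "a@u" l "v@b"] by simp
next
  case (rel p q u v) then show ?case using ceg_eq.rel[of p q mut arr cG "a@u" "v@b"] by simp
qed

lemma ceg_eq_app:
  assumes "ceg_eq mut arr cG x y" "ceg_eq mut arr cG x' y'"
  shows "ceg_eq mut arr cG (x @ x') (y @ y')"
proof -
  have "ceg_eq mut arr cG ([] @ x @ x') ([] @ y @ x')" by (rule ceg_eq_ctx[OF assms(1)])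
  moreover have "ceg_eq mut arr cG (y @ x' @ []) (y @ y' @ [])" by (rule ceg_eq_ctx[OF assms(2)])
  ultimately show ?thesis by (auto intro: ceg_eq.trans)
qed

lemma class_eq_iff: "ceg_class mut arr cG w = ceg_class mut arr cG v \<longleftrightarrow> ceg_eq mut arr cG w v"
proof
  assume "ceg_class mut arr cG w = ceg_class mut arr cG v"
  moreover have "v \<in> ceg_class mut arr cG v" by (simp add: ceg_class_def ceg_eq.refl)
  ultimately have "v \<in> ceg_class mut arr cG w" by simp
  then show "ceg_eq mut arr cG w v" by (simp add: ceg_class_def)
next
  assume "ceg_eq mut arr cG w v"
  then show "ceg_class mut arr cG w = ceg_class mut arr cG v"
    unfolding ceg_class_def by (blast intro: ceg_eq.trans ceg_eq.sym)
qed

lemma some_class: "ceg_eq mut arr cG w (SOME u. u \<in> ceg_class mut arr cG w)"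
proof -
  have "w \<in> ceg_class mut arr cG w" by (simp add: ceg_class_def ceg_eq.refl)
  then have "(SOME u. u \<in> ceg_class mut arr cG w) \<in> ceg_class mut arr cG w" by (rule someI)
  then show ?thesis by (simp add: ceg_class_def)
qed

lemma mult_class:
  "mult (pi1 mut arr cG c) (ceg_class mut arr cG a) (ceg_class mut arr cG b) = ceg_class mut arr cG (a @ b)"
  unfolding pi1_def apply simp
  unfolding class_eq_iff
  by (rule ceg_eq_app; rule ceg_eq.sym; rule some_class)

lemma one_pi1: "one (pi1 mut arr cG c) = ceg_class mut arr cG []"
  by (simp add: pi1_def)

lemma carrier_pi1: "x \<in> carrier (pi1 mut arr cG c) \<longleftrightarrow> (\<exists>w. x = ceg_class mut arr cG w \<and> walk mut cG c w c)"
  by (auto simp add: pi1_def)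

lemma conjz_class:
  "conjz mut arr cG z (ceg_class mut arr cG w) = ceg_class mut arr cG ([(z, False)] @ w @ [(z, True)])"
  unfolding conjz_def class_eq_iff
  by (rule ceg_eq_ctx, rule ceg_eq.sym, rule some_class)

lemma flip_flip[simp]: "flip (flip x) = x" by (cases x) simp

lemma inv_word_Cons[simp]: "inv_word (x # w) = inv_word w @ [flip x]"
  by (simp add: inv_word_def)

lemma inv_word_Nil[simp]: "inv_word [] = []"
  by (simp add: inv_word_def)

lemma inv_word_inv_word[simp]: "inv_word (inv_word w) = w"
  by (induction w) (auto simp: inv_word_def rev_map)

lemma cancel_inv: "ceg_eq mut arr cG (w @ inv_word w) []"
proof (induction w)
  case Nil then show ?case by (simp add: ceg_eq.refl)
next
  case (Cons x w)
  have "ceg_eq mut arr cG ([x] @ (w @ inv_word w) @ [flip x]) ([x] @ [] @ [flip x])"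
    by (rule ceg_eq_ctx[OF Cons])
  moreover have "ceg_eq mut arr cG ([] @ [x, flip x] @ []) ([] @ [])" by (rule ceg_eq.cancel)
  ultimately show ?case by (auto intro: ceg_eq.trans)
qed

lemma cancel_inv': "ceg_eq mut arr cG (inv_word w @ w) []"
  using cancel_inv[of mut arr cG "inv_word w"] by simp

lemma walk_append: "walk mut cG a (u @ v) b \<longleftrightarrow> (\<exists>m. walk mut cG a u m \<and> walk mut cG m v b)"
  by (induction u arbitrary: a) auto

lemma lsrc_flip[simp]: "lsrc mut (flip l) = ltgt mut l"
  by (cases l) auto
lemma ltgt_flip[simp]: "ltgt mut (flip l) = lsrc mut l"
  by (cases l) auto
lemma fst_flip[simp]: "fst (flip l) = fst l"
  by (cases l) auto

lemma walk_inv: "walk mut cG a w b \<Longrightarrow> walk mut cG b (inv_word w) a"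
  by (induction w arbitrary: a) (auto simp: walk_append)

lemma pi1_group: "group (pi1 mut arr cG c)"
proof (rule groupI)
  fix x y assume "x \<in> carrier (pi1 mut arr cG c)" "y \<in> carrier (pi1 mut arr cG c)"
  then obtain u v where "x = ceg_class mut arr cG u" "walk mut cG c u c"
     "y = ceg_class mut arr cG v" "walk mut cG c v c" by (auto simp: carrier_pi1)
  then show "mult (pi1 mut arr cG c) x y \<in> carrier (pi1 mut arr cG c)"
    by (auto simp: mult_class carrier_pi1 walk_append intro!: exI[where x="u@v"])
next
  show "one (pi1 mut arr cG c) \<in> carrier (pi1 mut arr cG c)"
    by (auto simp: one_pi1 carrier_pi1)
next
  fix x y z assume "x \<in> carrier (pi1 mut arr cG c)" "y \<in> carrier (pi1 mut arr cG c)" "z \<in> carrier (pi1 mut arr cG c)"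
  then show "mult (pi1 mut arr cG c) (mult (pi1 mut arr cG c) x y) z =
    mult (pi1 mut arr cG c) x (mult (pi1 mut arr cG c) y z)"
    by (auto simp: mult_class carrier_pi1)
next
  fix x assume "x \<in> carrier (pi1 mut arr cG c)"
  then show "mult (pi1 mut arr cG c) (one (pi1 mut arr cG c)) x = x"
    by (auto simp: mult_class carrier_pi1 one_pi1)
next
  fix x assume "x \<in> carrier (pi1 mut arr cG c)"
  then obtain u where u: "x = ceg_class mut arr cG u" "walk mut cG c u c" by (auto simp: carrier_pi1)
  show "\<exists>y\<in>carrier (pi1 mut arr cG c). mult (pi1 mut arr cG c) y x = one (pi1 mut arr cG c)"
  proof (intro bexI)
    show "ceg_class mut arr cG (inv_word u) \<in> carrier (pi1 mut arr cG c)"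
      using u walk_inv by (auto simp: carrier_pi1 intro!: exI[where x="inv_word u"] ceg_eq.refl)
    show "mult (pi1 mut arr cG c) (ceg_class mut arr cG (inv_word u)) x = one (pi1 mut arr cG c)"
      using u by (simp add: mult_class one_pi1 class_eq_iff cancel_inv')
  qed
qed

lemma inv_class:
  assumes "walk mut cG c u c"
  shows "inv\<^bsub>pi1 mut arr cG c\<^esub> (ceg_class mut arr cG u) = ceg_class mut arr cG (inv_word u)"
proof -
  interpret group "pi1 mut arr cG c" by (rule pi1_group)
  have c1: "ceg_class mut arr cG u \<in> carrier (pi1 mut arr cG c)"
    using assms by (auto simp: carrier_pi1)
  have c2: "ceg_class mut arr cG (inv_word u) \<in> carrier (pi1 mut arr cG c)"
    using walk_inv[OF assms] unfolding carrier_pi1 by blast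
  have m: "mult (pi1 mut arr cG c) (ceg_class mut arr cG (inv_word u)) (ceg_class mut arr cG u) = one (pi1 mut arr cG c)"
    by (simp add: mult_class one_pi1 class_eq_iff cancel_inv')
  show ?thesis by (rule inv_equality[OF m c1 c2])
qed


lemma strip:
  "ceg_eq mut arr cG (x # flip x # u @ [y, flip y]) u"
proof -
  have "ceg_eq mut arr cG ([] @ [x, flip x] @ (u @ [y, flip y])) ([] @ (u @ [y, flip y]))"
    by (rule ceg_eq.cancel)
  moreover have "ceg_eq mut arr cG (u @ [y, flip y] @ []) (u @ [])"
    by (rule ceg_eq.cancel)
  ultimately show ?thesis by (auto intro: ceg_eq.trans)
qed

context
  fixes mut :: "'o set \<Rightarrow> 'o \<Rightarrow> 'o" and arr :: "'o set \<Rightarrow> 'o \<Rightarrow> 'o \<Rightarrow> nat" and cG :: "'o set"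
  assumes cd: "cluster_data mut arr cG"
begin

lemma cd2: "\<forall>c \<in> reach mut cG. \<forall>X \<in> c. mut c X \<notin> c \<and> mut (mu mut c X) (mut c X) = X"
  using cd unfolding cluster_data_def by (elim conjE)

lemma cd3: "\<forall>c \<in> reach mut cG. \<forall>X \<in> c. \<forall>Y \<in> c. arr c X X = 0 \<and> (arr c X Y = 0 \<or> arr c Y X = 0)"
  using cd unfolding cluster_data_def by (elim conjE)

lemma cd4: "\<forall>c \<in> reach mut cG. \<forall>k \<in> c. \<forall>Y \<in> c - {k}.
        arr (mu mut c k) (mut c k) Y = arr c Y k \<and>
        arr (mu mut c k) Y (mut c k) = arr c k Y \<and>
        (\<forall>Z \<in> c - {k}. int (arr (mu mut c k) Y Z) =
           max 0 (bmat arr c Y Z + max 0 (bmat arr c Y k) * max 0 (bmat arr c k Z)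
                  - max 0 (bmat arr c k Y) * max 0 (bmat arr c Z k)))"
  using cd unfolding cluster_data_def by (elim conjE)

lemma cd_notin: "c \<in> reach mut cG \<Longrightarrow> X \<in> c \<Longrightarrow> mut c X \<notin> c"
  using cd2 by simp

lemma cd_invol: "c \<in> reach mut cG \<Longrightarrow> X \<in> c \<Longrightarrow> mut (mu mut c X) (mut c X) = X"
  using cd2 by simp

lemma cd_mumu: "c \<in> reach mut cG \<Longrightarrow> X \<in> c \<Longrightarrow> mu mut (mu mut c X) (mut c X) = c"
  using cd_invol[of c X] cd_notin[of c X] by (auto simp: mu_def)

lemma cd_loop: "c \<in> reach mut cG \<Longrightarrow> X \<in> c \<Longrightarrow> arr c X X = 0"
  using cd3 by simp

lemma cd_2cyc: "c \<in> reach mut cG \<Longrightarrow> X \<in> c \<Longrightarrow> Y \<in> c \<Longrightarrow> arr c X Y = 0 \<or> arr c Y X = 0"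
  using cd3 by simp

lemma cd_arr_mut: "c \<in> reach mut cG \<Longrightarrow> k \<in> c \<Longrightarrow> Y \<in> c \<Longrightarrow> Y \<noteq> k \<Longrightarrow>
    arr (mu mut c k) Y (mut c k) = arr c k Y"
proof -
  assume a: "c \<in> reach mut cG" "k \<in> c" "Y \<in> c" "Y \<noteq> k"
  then have "Y \<in> c - {k}" by simp
  with cd4 a(1,2) show ?thesis by blast
qed

lemma twist_walk: "c \<in> reach mut cG \<Longrightarrow> X \<in> c \<Longrightarrow> walk mut cG c (twist mut c X) c"
  using cd_mumu[of c X] reach.step[of c mut cG X]
  by (auto simp: twist_def fw_def fmuts_def mu_def)

lemma rel1:
  assumes "c \<in> reach mut cG" "i \<in> c" "j \<in> c" "i \<noteq> j" "arr c i j = 0"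
  shows "ceg_eq mut arr cG (u @ fw [(c, i), (mu mut c i, mut c i), (c, j)] @ v)
     (u @ fw [(c, j), (mu mut c j, i), (mu mut (mu mut c j) i, mut (mu mut c j) i)] @ v)"
proof (rule ceg_eq.rel)
  show "(fw [(c, i), (mu mut c i, mut c i), (c, j)],
     fw [(c, j), (mu mut c j, i), (mu mut (mu mut c j) i, mut (mu mut c j) i)]) \<in> ceg_rels mut arr cG"
    unfolding ceg_rels_def
    apply (rule UnI1, rule UnI1)
    apply (simp only: mem_Collect_eq)
    apply (rule exI[of _ c], rule exI[of _ i], rule exI[of _ j])
    apply (simp add: assms)
    done
qed

end

theorem mainTheorem2:
  fixes mut :: "'o set \<Rightarrow> 'o \<Rightarrow> 'o"
    and arr :: "'o set \<Rightarrow> 'o \<Rightarrow> 'o \<Rightarrow> nat"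
    and cG c0 :: "'o set" and k :: 'o
  assumes "cluster_data mut arr cG"
    and "c0 \<in> reach mut cG" and "k \<in> c0"
  defines "c1 \<equiv> mu mut c0 k"
    and "k' \<equiv> mut c0 k"
    and "\<sigma> \<equiv> (\<lambda>l. if l = k then mut c0 k else l)"
  shows "(\<forall>l \<in> c0.
            ceg_eq mut arr cG ([((c0, k), False)] @ twist mut c0 l @ [((c0, k), True)])
              (if arr c0 l k > 0
               then inv_word (twist mut c1 k') @ twist mut c1 (\<sigma> l) @ twist mut c1 k'
               else twist mut c1 (\<sigma> l)))
      \<and> conjz mut arr cG (c0, k) \<in> iso (pi1 mut arr cG c0) (pi1 mut arr cG c1)
      \<and> conjz mut arr cG (c0, k) ` CBr mut arr cG c0 = CBr mut arr cG c1"
proof -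
  note cd = assms(1) and r0 = assms(2) and k0 = assms(3)
  have r1: "c1 \<in> reach mut cG" unfolding c1_def using r0 k0 by (rule reach.step)
  have k'c1: "k' \<in> c1" by (simp add: c1_def k'_def mu_def)
  have k'c0: "k' \<notin> c0" unfolding k'_def by (rule cd_notin[OF cd r0 k0])
  have mk: "mut c1 k' = k" unfolding c1_def k'_def by (rule cd_invol[OF cd r0 k0])
  have mc: "mu mut c1 k' = c0" unfolding c1_def k'_def by (rule cd_mumu[OF cd r0 k0])
  have c1eq: "c1 = insert k' (c0 - {k})" by (simp add: c1_def k'_def mu_def)
  define zm where "zm = ((c0, k), False)"
  define zp where "zp = ((c0, k), True)"
  have fzp: "flip zp = zm" and fzm: "flip zm = zp" by (simp_all add: zm_def zp_def)
  have tw0: "twist mut c0 k = [zp, ((c1, k'), True)]"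
    by (simp add: twist_def fw_def zp_def c1_def k'_def)
  have tw1: "twist mut c1 k' = [((c1, k'), True), zp]"
    by (simp add: twist_def fw_def zp_def mk mc)
  have claim1: "ceg_eq mut arr cG ([zm] @ twist mut c0 l @ [zp])
              (if arr c0 l k > 0
               then inv_word (twist mut c1 k') @ twist mut c1 (\<sigma> l) @ twist mut c1 k'
               else twist mut c1 (\<sigma> l))" if l0: "l \<in> c0" for l
  proof (cases "l = k")
    case True
    have "arr c0 k k = 0" by (rule cd_loop[OF cd r0 k0])
    moreover have "ceg_eq mut arr cG ([] @ [zm, flip zm] @ [((c1, k'), True), zp]) ([] @ [((c1, k'), True), zp])"
      by (rule ceg_eq.cancel)
    ultimately show ?thesis using True by (simp add: tw0 tw1 fzm \<sigma>_def k'_def[symmetric])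
  next
    case False
    have sl: "\<sigma> l = l" using False by (simp add: \<sigma>_def)
    show ?thesis
    proof (cases "arr c0 l k > 0")
      case False
      then have a0: "arr c0 l k = 0" by simp
      have "ceg_eq mut arr cG ([zm] @ fw [(c0, l), (mu mut c0 l, mut c0 l), (c0, k)] @ [])
         ([zm] @ fw [(c0, k), (mu mut c0 k, l), (mu mut (mu mut c0 k) l, mut (mu mut c0 k) l)] @ [])"
        by (rule rel1[OF cd r0 l0 k0 \<open>l \<noteq> k\<close> a0])
      moreover have "ceg_eq mut arr cG ([] @ [zm, flip zm] @ twist mut c1 l) ([] @ twist mut c1 l)"
        by (rule ceg_eq.cancel)
      ultimately have "ceg_eq mut arr cG ([zm] @ twist mut c0 l @ [zp]) (twist mut c1 l)"
        by (auto simp: fw_def twist_def zp_def fzm c1_def intro: ceg_eq.trans)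
      then show ?thesis using False sl by simp
    next
      case True
      have "arr c0 k l = 0" using cd_2cyc[OF cd r0 k0 l0] True by simp
      then have a1: "arr c1 l k' = 0"
        using cd_arr_mut[OF cd r0 k0 l0 \<open>l \<noteq> k\<close>] by (simp add: c1_def k'_def)
      have l1: "l \<in> c1" using l0 \<open>l \<noteq> k\<close> c1eq by simp
      have lk': "l \<noteq> k'" using l0 k'c0 by auto
      have "ceg_eq mut arr cG ([zm, ((c1, k'), False)] @ fw [(c1, l), (mu mut c1 l, mut c1 l), (c1, k')] @ [zp])
         ([zm, ((c1, k'), False)] @ fw [(c1, k'), (mu mut c1 k', l), (mu mut (mu mut c1 k') l, mut (mu mut c1 k') l)] @ [zp])"
        by (rule rel1[OF cd r1 l1 k'c1 lk' a1])
      moreover have "ceg_eq mut arr cG ([zm] @ [((c1, k'), False), flip ((c1, k'), False)] @ (twist mut c0 l @ [zp])) ([zm] @ (twist mut c0 l @ [zp]))"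
        by (rule ceg_eq.cancel)
      ultimately have "ceg_eq mut arr cG (inv_word (twist mut c1 k') @ twist mut c1 l @ twist mut c1 k') ([zm] @ twist mut c0 l @ [zp])"
        by (auto simp: fw_def twist_def zp_def zm_def mc mk intro: ceg_eq.trans)
      then show ?thesis using True sl by (simp add: ceg_eq.sym)
    qed
  qed
  let ?G0 = "pi1 mut arr cG c0" and ?G1 = "pi1 mut arr cG c1" and ?f = "conjz mut arr cG (c0, k)"
  have zmw: "walk mut cG c1 [zm] c0" using r0 k0 by (simp add: zm_def fmuts_def c1_def)
  have zpw: "walk mut cG c0 [zp] c1" using r0 k0 by (simp add: zp_def fmuts_def c1_def)
  have fcl: "?f (ceg_class mut arr cG w) = ceg_class mut arr cG ([zm] @ w @ [zp])" for w
    by (simp add: conjz_class zm_def zp_def)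
  have hom: "?f \<in> hom ?G0 ?G1"
  proof (rule homI)
    fix x assume "x \<in> carrier ?G0"
    then obtain w where w: "x = ceg_class mut arr cG w" "walk mut cG c0 w c0" by (auto simp: carrier_pi1)
    have "walk mut cG c1 ([zm] @ w @ [zp]) c1" using zmw zpw w(2) by (auto simp: walk_append)
    then show "?f x \<in> carrier ?G1" unfolding carrier_pi1 w(1) fcl by blast
  next
    fix x y assume "x \<in> carrier ?G0" "y \<in> carrier ?G0"
    then obtain u v where u: "x = ceg_class mut arr cG u" and v: "y = ceg_class mut arr cG v"
      by (auto simp: carrier_pi1)
    have "ceg_eq mut arr cG (([zm] @ u) @ [zp, flip zp] @ (v @ [zp])) (([zm] @ u) @ (v @ [zp]))"
      by (rule ceg_eq.cancel)
    then show "?f (mult ?G0 x y) = mult ?G1 (?f x) (?f y)"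
      unfolding u v mult_class fcl class_eq_iff by (simp add: fzp ceg_eq.sym)
  qed
  have bij: "bij_betw ?f (carrier ?G0) (carrier ?G1)"
    unfolding bij_betw_def
  proof
    show "inj_on ?f (carrier ?G0)"
    proof (rule inj_onI)
      fix x y assume "x \<in> carrier ?G0" "y \<in> carrier ?G0" "?f x = ?f y"
      then obtain u v where u: "x = ceg_class mut arr cG u" and v: "y = ceg_class mut arr cG v"
        by (auto simp: carrier_pi1)
      have e: "ceg_eq mut arr cG ([zm] @ u @ [zp]) ([zm] @ v @ [zp])"
        using \<open>?f x = ?f y\<close> unfolding u v fcl class_eq_iff .
      have "ceg_eq mut arr cG ([zp] @ ([zm] @ u @ [zp]) @ [zm]) ([zp] @ ([zm] @ v @ [zp]) @ [zm])"
        by (rule ceg_eq_ctx[OF e])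
      moreover have "ceg_eq mut arr cG (zp # flip zp # u @ [zp, flip zp]) u" by (rule strip)
      moreover have "ceg_eq mut arr cG (zp # flip zp # v @ [zp, flip zp]) v" by (rule strip)
      ultimately have "ceg_eq mut arr cG u v" by (simp add: fzp) (blast intro: ceg_eq.trans ceg_eq.sym)
      then show "x = y" by (simp add: u v class_eq_iff)
    qed
  next
    show "?f ` carrier ?G0 = carrier ?G1"
    proof
      show "?f ` carrier ?G0 \<subseteq> carrier ?G1" using hom by (rule hom_carrier)
    next
      show "carrier ?G1 \<subseteq> ?f ` carrier ?G0"
      proof
        fix y assume "y \<in> carrier ?G1"
        then obtain v where v: "y = ceg_class mut arr cG v" "walk mut cG c1 v c1" by (auto simp: carrier_pi1)
        have w: "walk mut cG c0 ([zp] @ v @ [zm]) c0" using zmw zpw v(2) by (auto simp: walk_append)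
        have "ceg_eq mut arr cG (zm # flip zm # v @ [zm, flip zm]) v" by (rule strip)
        then have "?f (ceg_class mut arr cG ([zp] @ v @ [zm])) = y"
          by (simp add: fcl v class_eq_iff fzm)
        moreover have "ceg_class mut arr cG ([zp] @ v @ [zm]) \<in> carrier ?G0"
          using w unfolding carrier_pi1 by blast
        ultimately show "y \<in> ?f ` carrier ?G0" by (metis image_eqI)
      qed
    qed
  qed
  have iso: "?f \<in> iso ?G0 ?G1" using hom bij by (simp add: iso_def)
  interpret G1: group ?G1 by (rule pi1_group)
  interpret gh: group_hom ?G0 ?G1 ?f
    by (simp add: group_hom_def group_hom_axioms_def pi1_group hom)
  define S0 where "S0 = {ceg_class mut arr cG (twist mut c0 X) | X. X \<in> c0}"
  define S1 where "S1 = {ceg_class mut arr cG (twist mut c1 X) | X. X \<in> c1}"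
  have S0sub: "S0 \<subseteq> carrier ?G0"
  proof
    fix y assume "y \<in> S0"
    then obtain X where X: "X \<in> c0" "y = ceg_class mut arr cG (twist mut c0 X)" by (auto simp: S0_def)
    then show "y \<in> carrier ?G0" unfolding carrier_pi1 using twist_walk[OF cd r0 X(1)] by blast
  qed
  have S1sub: "S1 \<subseteq> carrier ?G1"
  proof
    fix y assume "y \<in> S1"
    then obtain X where X: "X \<in> c1" "y = ceg_class mut arr cG (twist mut c1 X)" by (auto simp: S1_def)
    then show "y \<in> carrier ?G1" unfolding carrier_pi1 using twist_walk[OF cd r1 X(1)] by blast
  qed
  have fS0sub: "?f ` S0 \<subseteq> carrier ?G1" using S0sub hom_carrier[OF hom] by blast
  have ftw: "?f (ceg_class mut arr cG (twist mut c0 l)) = ceg_class mut arr cG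
              (if arr c0 l k > 0
               then inv_word (twist mut c1 k') @ twist mut c1 (\<sigma> l) @ twist mut c1 k'
               else twist mut c1 (\<sigma> l))" if "l \<in> c0" for l
    unfolding fcl class_eq_iff by (rule claim1[OF that])
  define T where "T = ceg_class mut arr cG (twist mut c1 k')"
  have Tc: "T \<in> carrier ?G1" using S1sub k'c1 unfolding S1_def T_def by blast
  have conjform: "ceg_class mut arr cG (inv_word (twist mut c1 k') @ twist mut c1 l @ twist mut c1 k')
      = mult ?G1 (inv\<^bsub>?G1\<^esub> T) (mult ?G1 (ceg_class mut arr cG (twist mut c1 l)) T)" for l
    by (simp add: T_def mult_class inv_class[OF twist_walk[OF cd r1 k'c1]])
  have sig: "\<sigma> l \<in> c1" if "l \<in> c0" for l
    using that c1eq by (auto simp: \<sigma>_def k'_def)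
  have inc1: "generate ?G1 (?f ` S0) \<subseteq> generate ?G1 S1"
  proof (rule G1.generate_subgroup_incl[OF _ G1.generate_is_subgroup[OF S1sub]])
    show "?f ` S0 \<subseteq> generate ?G1 S1"
    proof
      fix y assume "y \<in> ?f ` S0"
      then obtain l where l: "l \<in> c0" "y = ?f (ceg_class mut arr cG (twist mut c0 l))"
        unfolding S0_def by blast
      have TS: "T \<in> S1" using k'c1 unfolding T_def S1_def by blast
      have LS: "ceg_class mut arr cG (twist mut c1 (\<sigma> l)) \<in> S1" using sig[OF l(1)] unfolding S1_def by blast
      show "y \<in> generate ?G1 S1"
      proof (cases "arr c0 l k > 0")
        case True
        then show ?thesis unfolding l(2) ftw[OF l(1)] using True conjform
          by (simp add: generate.eng generate.inv generate.incl TS LS)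
      next
        case False
        then show ?thesis unfolding l(2) ftw[OF l(1)] using LS by (simp add: generate.incl)
      qed
    qed
  qed
  have inc2: "generate ?G1 S1 \<subseteq> generate ?G1 (?f ` S0)"
  proof (rule G1.generate_subgroup_incl[OF _ G1.generate_is_subgroup[OF fS0sub]])
    have kk: "arr c0 k k = 0" by (rule cd_loop[OF cd r0 k0])
    have TfS: "T \<in> ?f ` S0"
    proof -
      have "?f (ceg_class mut arr cG (twist mut c0 k)) = T"
        using ftw[OF k0] kk by (simp add: T_def \<sigma>_def k'_def)
      moreover have "ceg_class mut arr cG (twist mut c0 k) \<in> S0" using k0 unfolding S0_def by blast
      ultimately show ?thesis by blast
    qed
    show "S1 \<subseteq> generate ?G1 (?f ` S0)"
    proof
      fix y assume "y \<in> S1"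
      then obtain l where l: "l \<in> c1" "y = ceg_class mut arr cG (twist mut c1 l)"
        unfolding S1_def by blast
      show "y \<in> generate ?G1 (?f ` S0)"
      proof (cases "l = k'")
        case True
        then show ?thesis using TfS l(2) by (simp add: T_def generate.incl)
      next
        case False
        then have l0: "l \<in> c0" "l \<noteq> k" using l(1) c1eq by auto
        have sl: "\<sigma> l = l" using l0 by (simp add: \<sigma>_def)
        have AS: "?f (ceg_class mut arr cG (twist mut c0 l)) \<in> ?f ` S0" using l0 unfolding S0_def by blast
        show ?thesis
        proof (cases "arr c0 l k > 0")
          case False
          then show ?thesis using AS ftw[OF l0(1)] sl l(2) by (simp add: generate.incl)
        next
          case True
          define A where "A = ?f (ceg_class mut arr cG (twist mut c0 l))"
          have yc: "y \<in> carrier ?G1" using S1sub \<open>y \<in> S1\<close> by blast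
          have A: "A = mult ?G1 (inv\<^bsub>?G1\<^esub> T) (mult ?G1 y T)"
            unfolding A_def ftw[OF l0(1)] using True sl l(2) conjform by simp
          have iT: "inv\<^bsub>?G1\<^esub> T \<in> carrier ?G1" using Tc by simp
          have "mult ?G1 T (mult ?G1 A (inv\<^bsub>?G1\<^esub> T))
              = mult ?G1 T (mult ?G1 (inv\<^bsub>?G1\<^esub> T) (mult ?G1 y (mult ?G1 T (inv\<^bsub>?G1\<^esub> T))))"
            unfolding A using Tc yc iT by (simp add: G1.m_assoc)
          also have "\<dots> = mult ?G1 T (mult ?G1 (inv\<^bsub>?G1\<^esub> T) y)"
            using Tc yc by simp
          also have "\<dots> = mult ?G1 (mult ?G1 T (inv\<^bsub>?G1\<^esub> T)) y"
            by (rule G1.m_assoc[symmetric]) (use Tc yc iT in auto)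
          also have "\<dots> = y" using Tc yc by simp
          finally have "y = mult ?G1 T (mult ?G1 A (inv\<^bsub>?G1\<^esub> T))" by simp
          moreover have "A \<in> generate ?G1 (?f ` S0)" using AS unfolding A_def by (rule generate.incl)
          ultimately show ?thesis using TfS
            by (metis generate.eng generate.inv generate.incl)
        qed
      qed
    qed
  qed
  have "?f ` CBr mut arr cG c0 = CBr mut arr cG c1"
    unfolding CBr_def S0_def[symmetric] S1_def[symmetric]
    using gh.generate_img[OF S0sub] inc1 inc2 by simp
  then show ?thesis using claim1 iso by (simp add: zm_def zp_def)
qed

end
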